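(* Let $G=([n],E)$ be a persistent graph and let $a,b,c$ be vertices such that $b<c$, $\{b,c\} \subseteq N(a)$, and there is no vertex $x \in N[a]$ with $b < x < c$. Then $\{b,c\} \in E$.
   Context: $[n]=\{1,\dots,n\}$. A graph $G=([n],E)$ is persistent if (1) it contains the Hamilton path $1,2,\dots,n$, i.e. $\{i,i+1\}\in E$ for all $1\le i<n$; (2) (X-property) if $\{a,c\}\in E$ and $\{b,d\}\in E$ for vertices $a<b<c<d$, then $\{a,d\}\in E$; (3) (bar-property) for every edge $\{a,b\}\in E$ with $a<b-1$ there is a vertex $x$ with $a<x<b$ such that $\{a,x\}\in E$ and $\{x,b\}\in E$. $N(v)$ denotes the set of neighbors of $v$ and $N[v]=N(v)\cup\{v\}$. *)

theory Defs
  imports Main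
begin

definition simple_graph_on :: "nat \<Rightarrow> nat set set \<Rightarrow> bool" where
  "simple_graph_on n E \<longleftrightarrow>
     (\<forall>e\<in>E. \<exists>u v. e = {u, v} \<and> u \<noteq> v \<and> u \<in> {1..n} \<and> v \<in> {1..n})"

definition persistent :: "nat \<Rightarrow> nat set set \<Rightarrow> bool" where
  "persistent n E \<longleftrightarrow>
     simple_graph_on n E \<and>
     (\<forall>i. 1 \<le> i \<and> i < n \<longrightarrow> {i, i + 1} \<in> E) \<and>
     (\<forall>a b c d. a \<in> {1..n} \<and> b \<in> {1..n} \<and> c \<in> {1..n} \<and> d \<in> {1..n} \<and>
        a < b \<and> b < c \<and> c < d \<and> {a, c} \<in> E \<and> {b, d} \<in> E \<longrightarrow> {a, d} \<in> E) \<and>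
     (\<forall>a b. {a, b} \<in> E \<and> a < b - 1 \<longrightarrow>
        (\<exists>x. a < x \<and> x < b \<and> {a, x} \<in> E \<and> {x, b} \<in> E))"

definition nbhd :: "nat set set \<Rightarrow> nat \<Rightarrow> nat set" where
  "nbhd E v = {u. {v, u} \<in> E}"

definition closed_nbhd :: "nat set set \<Rightarrow> nat \<Rightarrow> nat set" where
  "closed_nbhd E v = insert v (nbhd E v)"

end

theory Submission
  imports Defs
begin

lemma edge_sym: "{u, v} = {v, u}" by (rule insert_commute)

lemma edge_vert:
  assumes "persistent n E" "{u, v} \<in> E"
  shows "u \<in> {1..n} \<and> v \<in> {1..n} \<and> u \<noteq> v"
proof -
  from assms obtain p q where "{u,v} = {p,q}" "p \<noteq> q" "p \<in> {1..n}" "q \<in> {1..n}"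
    unfolding persistent_def simple_graph_on_def by blast
  then show ?thesis by (auto simp: doubleton_eq_iff)
qed

lemma Xp:
  assumes "persistent n E" "A < B" "B < C" "C < D" "{A, C} \<in> E" "{B, D} \<in> E"
  shows "{A, D} \<in> E"
proof -
  have "A \<in> {1..n}" "C \<in> {1..n}" using edge_vert[OF assms(1) assms(5)] by auto
  moreover have "B \<in> {1..n}" "D \<in> {1..n}" using edge_vert[OF assms(1) assms(6)] by auto
  ultimately show ?thesis using assms unfolding persistent_def by blast
qed

lemma barp:
  assumes "persistent n E" "{u, v} \<in> E" "u < v - 1"
  shows "\<exists>x. u < x \<and> x < v \<and> {u, x} \<in> E \<and> {x, v} \<in> E"
  using assms unfolding persistent_def by blast

lemma caseL:
  assumes P: "persistent n E" and "a < b" "b < c" and ab: "{a, b} \<in> E" and ac: "{a, c} \<in> E"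
    and no: "\<And>x. {a, x} \<in> E \<Longrightarrow> b < x \<Longrightarrow> x < c \<Longrightarrow> False"
  shows "{b, c} \<in> E"
proof -
  define S where "S = {y. a \<le> y \<and> y < b \<and> {y, c} \<in> E}"
  have fin: "finite S" unfolding S_def by (rule finite_subset[of _ "{..b}"]) auto
  have "a \<in> S" unfolding S_def using assms by auto
  define y where "y = Max S"
  have yS: "y \<in> S" unfolding y_def using Max_in[OF fin] \<open>a \<in> S\<close> by blast
  have ymax: "\<And>w. w \<in> S \<Longrightarrow> w \<le> y" unfolding y_def using fin by simp
  from yS have y1: "a \<le> y" "y < b" "{y, c} \<in> E" unfolding S_def by auto
  then obtain z where z: "y < z" "z < c" "{y, z} \<in> E" "{z, c} \<in> E"
    using barp[OF P y1(3)] \<open>b < c\<close> by fastforce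
  show ?thesis
  proof (cases "z < b")
    case True
    then have "z \<in> S" unfolding S_def using z y1 by auto
    then show ?thesis using ymax z by fastforce
  next
    case False
    show ?thesis
    proof (cases "z = b")
      case True then show ?thesis using z by simp
    next
      case False
      with \<open>\<not> z < b\<close> have bz: "b < z" by simp
      have "{a, z} \<in> E"
      proof (cases "y = a")
        case True then show ?thesis using z by simp
      next
        case False
        then have "a < y" using y1 by simp
        then show ?thesis using Xp[OF P \<open>a < y\<close> \<open>y < b\<close> bz ab z(3)] by simp
      qed
      then show ?thesis using no bz z by blast
    qed
  qed
qed

lemma caseR:
  assumes P: "persistent n E" and "b < c" "c < a" and ab: "{a, b} \<in> E" and ac: "{a, c} \<in> E"
    and no: "\<And>x. {a, x} \<in> E \<Longrightarrow> b < x \<Longrightarrow> x < c \<Longrightarrow> False"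
  shows "{b, c} \<in> E"
proof -
  define S where "S = {y. c < y \<and> y \<le> a \<and> {b, y} \<in> E}"
  have fin: "finite S" unfolding S_def by (rule finite_subset[of _ "{..a}"]) auto
  have "a \<in> S" unfolding S_def using assms by (auto simp: edge_sym)
  define y where "y = Min S"
  have yS: "y \<in> S" unfolding y_def using Min_in[OF fin] \<open>a \<in> S\<close> by blast
  have ymin: "\<And>w. w \<in> S \<Longrightarrow> y \<le> w" unfolding y_def using fin by simp
  from yS have y1: "c < y" "y \<le> a" "{b, y} \<in> E" unfolding S_def by auto
  then obtain z where z: "b < z" "z < y" "{b, z} \<in> E" "{z, y} \<in> E"
    using barp[OF P y1(3)] \<open>b < c\<close> by fastforce
  show ?thesis
  proof (cases "c < z")
    case True
    then have "z \<in> S" unfolding S_def using z y1 by auto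
    then show ?thesis using ymin z by fastforce
  next
    case False
    show ?thesis
    proof (cases "z = c")
      case True then show ?thesis using z by simp
    next
      case False
      with \<open>\<not> c < z\<close> have zc: "z < c" by simp
      have "{z, a} \<in> E"
      proof (cases "y = a")
        case True then show ?thesis using z by simp
      next
        case False
        then have "y < a" using y1 by simp
        have "{c, a} \<in> E" using ac by (simp add: edge_sym)
        then show ?thesis using Xp[OF P zc \<open>c < y\<close> \<open>y < a\<close> z(4)] by simp
      qed
      then have "{a, z} \<in> E" by (simp add: edge_sym)
      then show ?thesis using no z zc by blast
    qed
  qed
qed

theorem lemma5:
  fixes n a b c :: nat and E :: "nat set set"
  assumes "persistent n E"
    and "a \<in> {1..n}" and "b \<in> {1..n}" and "c \<in> {1..n}"
    and "b < c"
    and "{b, c} \<subseteq> nbhd E a"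
    and "\<not> (\<exists>x \<in> closed_nbhd E a. b < x \<and> x < c)"
  shows "{b, c} \<in> E"
proof -
  have ab: "{a, b} \<in> E" and ac: "{a, c} \<in> E" using assms(6) unfolding nbhd_def by auto
  have no: "\<And>x. {a, x} \<in> E \<Longrightarrow> b < x \<Longrightarrow> x < c \<Longrightarrow> False"
    using assms(7) unfolding closed_nbhd_def nbhd_def by blast
  have "a \<noteq> b" "a \<noteq> c" using edge_vert[OF assms(1) ab] edge_vert[OF assms(1) ac] by auto
  moreover have "\<not> (b < a \<and> a < c)" using assms(7) unfolding closed_nbhd_def by blast
  ultimately have "a < b \<or> c < a" using assms(5) by linarith
  then show ?thesis
  proof
    assume "a < b" then show ?thesis using caseL[OF assms(1) _ assms(5) ab ac] no by blast
  next
    assume "c < a" then show ?thesis using caseR[OF assms(1) assms(5) _ ab ac] no by blast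
  qed
qed

end
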